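(* Consider one seller with one item and $n$ ex-interim rational buyers $N=\{1,\dots,n\}$; the item's quality $q\in Q=[q_1,q_2]$ has density $g$ and is observed only by the seller; buyer $i$'s valuation is $v_i(q)\ge0$. Let $\pi$ satisfy $\pi(q,s_i)\ge0$ for $i\in\{0,\dots,n\}$ and $\sum_{i\in N}\pi(q,s_i)+\pi(q,s_0)=1$ for all $q$, and let $p$ be such that for all $i\in N$: $\int_Q\pi(q,s_i)[v_i(q)-p]g(q)\,\mathrm{d}q\ge0$ and $\int_Q\pi(q,s_i)[v_i(q)-p]g(q)\,\mathrm{d}q\ge\mathbb{E}_q[v_i(q)]-p$. Then $Rev_{sig}(\pi,p)=p\int_Q\sum_{i\in N}\pi(q,s_i)g(q)\,\mathrm{d}q\le\mathbb{E}_q[v_{max}(q)]$, where $v_{max}(q)=\max_i v_i(q)$.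
   Context: Signal $s_i$ ($i\in N$) recommends buyer $i$ to buy and others not to buy; $s_0$ recommends no one to buy. The constraints express obedience of ex-interim rational buyers, who buy iff their posterior expected valuation is at least $p$. $\mathbb{E}_q$ is expectation under the prior density $g$. *)

theory Defs
  imports "HOL-Analysis.Analysis"
begin

text \<open>Buyers are N = {1..n}; signal index 0 is s_0 (recommend nobody),
  index i in N is s_i. The quality space is Q = {q1..q2}; integrals over Q
  are Lebesgue set integrals w.r.t. lborel.\<close>

definition vmax :: "nat \<Rightarrow> (nat \<Rightarrow> real \<Rightarrow> real) \<Rightarrow> real \<Rightarrow> real" where
  "vmax n v q = Max ((\<lambda>i. v i q) ` {1..n})"

definition expect_q :: "real \<Rightarrow> real \<Rightarrow> (real \<Rightarrow> real) \<Rightarrow> (real \<Rightarrow> real) \<Rightarrow> real" where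
  "expect_q q1 q2 g f = (LINT q:{q1..q2}|lborel. f q * g q)"

definition Rev_sig :: "nat \<Rightarrow> real \<Rightarrow> real \<Rightarrow> (real \<Rightarrow> real) \<Rightarrow> (real \<Rightarrow> nat \<Rightarrow> real) \<Rightarrow> real \<Rightarrow> real" where
  "Rev_sig n q1 q2 g \<pi> p = p * (LINT q:{q1..q2}|lborel. (\<Sum>i\<in>{1..n}. \<pi> q i) * g q)"

end

theory Submission
  imports Defs
begin

theorem mainTheorem10:
  fixes n :: nat and q1 q2 p :: real
    and g :: "real \<Rightarrow> real"
    and v :: "nat \<Rightarrow> real \<Rightarrow> real"
    and \<pi> :: "real \<Rightarrow> nat \<Rightarrow> real"
  assumes n_pos: "n \<ge> 1"
    and g_nonneg: "\<And>q. q \<in> {q1..q2} \<Longrightarrow> g q \<ge> 0"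
    and g_int: "set_integrable lborel {q1..q2} g"
    and g_density: "(LINT q:{q1..q2}|lborel. g q) = 1"
    and v_nonneg: "\<And>i q. i \<in> {1..n} \<Longrightarrow> q \<in> {q1..q2} \<Longrightarrow> v i q \<ge> 0"
    and v_int: "\<And>i. i \<in> {1..n} \<Longrightarrow> set_integrable lborel {q1..q2} (\<lambda>q. v i q * g q)"
    and \<pi>_meas: "\<And>i. i \<in> {0..n} \<Longrightarrow> (\<lambda>q. \<pi> q i) \<in> borel_measurable lborel"
    and \<pi>_nonneg: "\<And>i q. i \<in> {0..n} \<Longrightarrow> q \<in> {q1..q2} \<Longrightarrow> \<pi> q i \<ge> 0"
    and \<pi>_sum: "\<And>q. q \<in> {q1..q2} \<Longrightarrow> (\<Sum>i\<in>{1..n}. \<pi> q i) + \<pi> q 0 = 1"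
    and obed1: "\<And>i. i \<in> {1..n} \<Longrightarrow>
       (LINT q:{q1..q2}|lborel. \<pi> q i * (v i q - p) * g q) \<ge> 0"
    and obed2: "\<And>i. i \<in> {1..n} \<Longrightarrow>
       (LINT q:{q1..q2}|lborel. \<pi> q i * (v i q - p) * g q) \<ge> expect_q q1 q2 g (v i) - p"
  shows "Rev_sig n q1 q2 g \<pi> p \<le> expect_q q1 q2 g (vmax n v)"
proof -
  let ?Q = "{q1..q2}"
  let ?I = "\<lambda>q. indicator ?Q q :: real"
  have pi_le1: "\<pi> q i \<le> 1" if "i \<in> {1..n}" "q \<in> ?Q" for i q
  proof -
    have "\<pi> q i \<le> (\<Sum>j\<in>{1..n}. \<pi> q j)"
      using that \<pi>_nonneg by (intro member_le_sum) auto
    moreover have "\<pi> q 0 \<ge> 0" using that \<pi>_nonneg by auto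
    ultimately show ?thesis using \<pi>_sum[OF that(2)] by linarith
  qed
  have gI: "integrable lborel (\<lambda>q. ?I q * g q)"
    using g_int unfolding set_integrable_def by simp
  have vI: "integrable lborel (\<lambda>q. ?I q * (v i q * g q))" if "i \<in> {1..n}" for i
    using v_int[OF that] unfolding set_integrable_def by simp
  have pm: "(\<lambda>q. \<pi> q i) \<in> borel_measurable lborel" if "i \<in> {1..n}" for i
    using \<pi>_meas that by auto
  have A: "integrable lborel (\<lambda>q. ?I q * (\<pi> q i * g q))" if i: "i \<in> {1..n}" for i
  proof (rule Bochner_Integration.integrable_bound[OF gI])
    show "(\<lambda>q. ?I q * (\<pi> q i * g q)) \<in> borel_measurable lborel"
    proof -
      have "(\<lambda>q. \<pi> q i * (?I q * g q)) \<in> borel_measurable lborel"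
        using pm[OF i] borel_measurable_integrable[OF gI] by measurable
      then show ?thesis by (simp add: ac_simps)
    qed
    show "AE q in lborel. norm (?I q * (\<pi> q i * g q)) \<le> norm (?I q * g q)"
    proof (rule AE_I2)
      fix q
      show "norm (?I q * (\<pi> q i * g q)) \<le> norm (?I q * g q)"
      proof (cases "q \<in> ?Q")
        case True
        then have "0 \<le> \<pi> q i" "\<pi> q i \<le> 1" "0 \<le> g q"
          using \<pi>_nonneg i pi_le1 g_nonneg by auto
        then show ?thesis using True by (simp add: abs_mult mult_left_le_one_le)
      qed simp
    qed
  qed
  have B: "integrable lborel (\<lambda>q. ?I q * (\<pi> q i * v i q * g q))" if i: "i \<in> {1..n}" for i
  proof (rule Bochner_Integration.integrable_bound[OF vI[OF i]])
    show "(\<lambda>q. ?I q * (\<pi> q i * v i q * g q)) \<in> borel_measurable lborel"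
    proof -
      have "(\<lambda>q. \<pi> q i * (?I q * (v i q * g q))) \<in> borel_measurable lborel"
        using pm[OF i] borel_measurable_integrable[OF vI[OF i]] by measurable
      then show ?thesis by (simp add: ac_simps)
    qed
    show "AE q in lborel. norm (?I q * (\<pi> q i * v i q * g q)) \<le> norm (?I q * (v i q * g q))"
    proof (rule AE_I2)
      fix q
      show "norm (?I q * (\<pi> q i * v i q * g q)) \<le> norm (?I q * (v i q * g q))"
      proof (cases "q \<in> ?Q")
        case True
        then have "0 \<le> \<pi> q i" "\<pi> q i \<le> 1" "0 \<le> g q" "0 \<le> v i q"
          using \<pi>_nonneg i pi_le1 g_nonneg v_nonneg by auto
        then show ?thesis using True
          by (simp add: abs_mult mult_left_le_one_le mult.assoc)
      qed simp
    qed
  qed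
  have step: "p * (LINT q:?Q|lborel. \<pi> q i * g q) \<le> (LINT q:?Q|lborel. \<pi> q i * v i q * g q)"
    if i: "i \<in> {1..n}" for i
  proof -
    have "(LINT q:?Q|lborel. \<pi> q i * (v i q - p) * g q)
        = (LINT q:?Q|lborel. \<pi> q i * v i q * g q) - p * (LINT q:?Q|lborel. \<pi> q i * g q)"
    proof -
      have "(LINT q:?Q|lborel. \<pi> q i * (v i q - p) * g q)
          = integral\<^sup>L lborel (\<lambda>q. ?I q * (\<pi> q i * v i q * g q) - p * (?I q * (\<pi> q i * g q)))"
        unfolding set_lebesgue_integral_def
        by (rule arg_cong[where f="integral\<^sup>L lborel"]) (auto simp: algebra_simps)
      also have "\<dots> = integral\<^sup>L lborel (\<lambda>q. ?I q * (\<pi> q i * v i q * g q)) - p * integral\<^sup>L lborel (\<lambda>q. ?I q * (\<pi> q i * g q))"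
        using A[OF i] B[OF i] by simp
      finally show ?thesis unfolding set_lebesgue_integral_def by simp
    qed
    then show ?thesis using obed1[OF i] by linarith
  qed
  have vmax_ge: "v i q \<le> vmax n v q" if "i \<in> {1..n}" for i q
    unfolding vmax_def using that by (intro Max_ge) auto
  have vmax_nn: "0 \<le> vmax n v q" if "q \<in> ?Q" for q
    using vmax_ge[of 1 q] v_nonneg[of 1 q] n_pos that by auto
  have vmaxI: "?I q * (vmax n v q * g q) = Max ((\<lambda>i. ?I q * (v i q * g q)) ` {1..n})" for q
  proof (cases "q \<in> ?Q")
    case True
    have "Max ((\<lambda>i. ?I q * (v i q * g q)) ` {1..n}) = Max ((\<lambda>x. x * g q) ` ((\<lambda>i. v i q) ` {1..n}))"
      using True by (simp add: image_image)
    also have "\<dots> = Max ((\<lambda>i. v i q) ` {1..n}) * g q"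
      using n_pos g_nonneg[OF True]
      by (intro mono_Max_commute[symmetric]) (auto intro: monoI mult_right_mono)
    finally show ?thesis using True by (simp add: vmax_def)
  next
    case False
    have "(\<lambda>i. ?I q * (v i q * g q)) ` {1..n} = {0}" using False n_pos by auto
    then show ?thesis using False by simp
  qed
  have C: "integrable lborel (\<lambda>q. ?I q * (vmax n v q * g q))"
  proof (rule Bochner_Integration.integrable_bound[OF Bochner_Integration.integrable_sum[where I="{1..n}" and f="\<lambda>i q. ?I q * (v i q * g q)", OF vI]])
    show "(\<lambda>q. ?I q * (vmax n v q * g q)) \<in> borel_measurable lborel"
      unfolding vmaxI by (intro borel_measurable_Max borel_measurable_integrable vI) auto
    show "AE q in lborel. norm (?I q * (vmax n v q * g q)) \<le> norm (\<Sum>i\<in>{1..n}. ?I q * (v i q * g q))"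
    proof (rule AE_I2)
      fix q
      show "norm (?I q * (vmax n v q * g q)) \<le> norm (\<Sum>i\<in>{1..n}. ?I q * (v i q * g q))"
      proof (cases "q \<in> ?Q")
        case True
        obtain k where k: "k \<in> {1..n}" "vmax n v q = v k q"
        proof -
          have "Max ((\<lambda>i. v i q) ` {1..n}) \<in> (\<lambda>i. v i q) ` {1..n}"
            using n_pos by (intro Max_in) auto
          then show ?thesis using that unfolding vmax_def by blast
        qed
        have "v k q * g q \<le> (\<Sum>i\<in>{1..n}. v i q * g q)"
          using k True v_nonneg g_nonneg by (intro member_le_sum) auto
        moreover have "0 \<le> v k q * g q" using k True v_nonneg g_nonneg by auto
        ultimately show ?thesis using True k by simp
      qed simp
    qed
  qed auto
  have "Rev_sig n q1 q2 g \<pi> p = (\<Sum>i\<in>{1..n}. p * (LINT q:?Q|lborel. \<pi> q i * g q))"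
  proof -
    have "(LINT q:?Q|lborel. (\<Sum>i\<in>{1..n}. \<pi> q i) * g q)
        = integral\<^sup>L lborel (\<lambda>q. \<Sum>i\<in>{1..n}. ?I q * (\<pi> q i * g q))"
      unfolding set_lebesgue_integral_def
      by (rule arg_cong[where f="integral\<^sup>L lborel"]) (simp add: sum_distrib_left sum_distrib_right mult.assoc)
    also have "\<dots> = (\<Sum>i\<in>{1..n}. integral\<^sup>L lborel (\<lambda>q. ?I q * (\<pi> q i * g q)))"
      using A by (intro Bochner_Integration.integral_sum) auto
    finally show ?thesis unfolding Rev_sig_def set_lebesgue_integral_def
      by (simp add: sum_distrib_left)
  qed
  also have "\<dots> \<le> (\<Sum>i\<in>{1..n}. (LINT q:?Q|lborel. \<pi> q i * v i q * g q))"
    using step by (intro sum_mono) auto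
  also have "\<dots> = integral\<^sup>L lborel (\<lambda>q. \<Sum>i\<in>{1..n}. ?I q * (\<pi> q i * v i q * g q))"
    unfolding set_lebesgue_integral_def using B by (subst Bochner_Integration.integral_sum) auto
  also have "\<dots> \<le> integral\<^sup>L lborel (\<lambda>q. ?I q * (vmax n v q * g q))"
  proof (rule integral_mono)
    show "integrable lborel (\<lambda>q. \<Sum>i\<in>{1..n}. ?I q * (\<pi> q i * v i q * g q))"
      using B by (intro Bochner_Integration.integrable_sum) auto
    show "integrable lborel (\<lambda>q. ?I q * (vmax n v q * g q))" by (rule C)
    fix q
    show "(\<Sum>i\<in>{1..n}. ?I q * (\<pi> q i * v i q * g q)) \<le> ?I q * (vmax n v q * g q)"
    proof (cases "q \<in> ?Q")
      case True
      have "(\<Sum>i\<in>{1..n}. \<pi> q i * v i q * g q) \<le> (\<Sum>i\<in>{1..n}. \<pi> q i * vmax n v q * g q)"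
        using True \<pi>_nonneg g_nonneg vmax_ge
        by (intro sum_mono mult_right_mono mult_left_mono) auto
      also have "\<dots> = (\<Sum>i\<in>{1..n}. \<pi> q i) * (vmax n v q * g q)"
        by (simp add: sum_distrib_right mult.assoc)
      also have "\<dots> \<le> 1 * (vmax n v q * g q)"
      proof (rule mult_right_mono)
        show "(\<Sum>i\<in>{1..n}. \<pi> q i) \<le> 1"
          using \<pi>_sum[OF True] \<pi>_nonneg[of 0 q] True by auto
        show "0 \<le> vmax n v q * g q" using vmax_nn[OF True] g_nonneg[OF True] by simp
      qed
      finally show ?thesis using True by simp
    qed simp
  qed
  also have "\<dots> = expect_q q1 q2 g (vmax n v)"
    unfolding expect_q_def set_lebesgue_integral_def by simp
  finally show ?thesis .
qed

end
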